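(* Let $T$ be a pre-truss and $P$ a left-closed normal sub-heap of $T$. If $P$ contains a left ideal of $T$, then $P$ is a left ideal of $T$.
   Context: A heap is a set with a ternary operation $[-,-,-]$ satisfying $[a_1,a_2,[a_3,a_4,a_5]]=[[a_1,a_2,a_3],a_4,a_5]$ and $[a,a,b]=b=[b,a,a]$. A pre-truss is a heap with an associative binary operation (juxtaposition). A normal sub-heap is a non-empty subset $S$ closed under $[-,-,-]$ with $[[a,e,s],a,e]\in S$ for all $a\in T$, $e,s\in S$. A sub-heap $S$ is left-closed if $[ts',ts,s]\in S$ for all $s,s'\in S$, $t\in T$. A left ideal is a normal sub-heap $I$ with $ti\in I$ for all $t\in T$, $i\in I$. *)

theory Defs
  imports Main
begin

definition heap :: "'a set \<Rightarrow> ('a \<Rightarrow> 'a \<Rightarrow> 'a \<Rightarrow> 'a) \<Rightarrow> bool" where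
  "heap T h \<longleftrightarrow>
     (\<forall>a\<in>T. \<forall>b\<in>T. \<forall>c\<in>T. h a b c \<in> T) \<and>
     (\<forall>a1\<in>T. \<forall>a2\<in>T. \<forall>a3\<in>T. \<forall>a4\<in>T. \<forall>a5\<in>T.
        h a1 a2 (h a3 a4 a5) = h (h a1 a2 a3) a4 a5) \<and>
     (\<forall>a\<in>T. \<forall>b\<in>T. h a a b = b \<and> h b a a = b)"

definition pretruss :: "'a set \<Rightarrow> ('a \<Rightarrow> 'a \<Rightarrow> 'a \<Rightarrow> 'a) \<Rightarrow> ('a \<Rightarrow> 'a \<Rightarrow> 'a) \<Rightarrow> bool" where
  "pretruss T h m \<longleftrightarrow> heap T h \<and>
     (\<forall>a\<in>T. \<forall>b\<in>T. m a b \<in> T) \<and>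
     (\<forall>a\<in>T. \<forall>b\<in>T. \<forall>c\<in>T. m (m a b) c = m a (m b c))"

definition sub_heap :: "'a set \<Rightarrow> ('a \<Rightarrow> 'a \<Rightarrow> 'a \<Rightarrow> 'a) \<Rightarrow> 'a set \<Rightarrow> bool" where
  "sub_heap T h S \<longleftrightarrow> S \<noteq> {} \<and> S \<subseteq> T \<and>
     (\<forall>a\<in>S. \<forall>b\<in>S. \<forall>c\<in>S. h a b c \<in> S)"

definition normal_subheap :: "'a set \<Rightarrow> ('a \<Rightarrow> 'a \<Rightarrow> 'a \<Rightarrow> 'a) \<Rightarrow> 'a set \<Rightarrow> bool" where
  "normal_subheap T h S \<longleftrightarrow> sub_heap T h S \<and>
     (\<forall>a\<in>T. \<forall>e\<in>S. \<forall>s\<in>S. h (h a e s) a e \<in> S)"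

definition left_closed :: "'a set \<Rightarrow> ('a \<Rightarrow> 'a \<Rightarrow> 'a \<Rightarrow> 'a) \<Rightarrow> ('a \<Rightarrow> 'a \<Rightarrow> 'a) \<Rightarrow> 'a set \<Rightarrow> bool" where
  "left_closed T h m S \<longleftrightarrow> sub_heap T h S \<and>
     (\<forall>s\<in>S. \<forall>s'\<in>S. \<forall>t\<in>T. h (m t s') (m t s) s \<in> S)"

definition left_ideal :: "'a set \<Rightarrow> ('a \<Rightarrow> 'a \<Rightarrow> 'a \<Rightarrow> 'a) \<Rightarrow> ('a \<Rightarrow> 'a \<Rightarrow> 'a) \<Rightarrow> 'a set \<Rightarrow> bool" where
  "left_ideal T h m I \<longleftrightarrow> normal_subheap T h I \<and> (\<forall>t\<in>T. \<forall>i\<in>I. m t i \<in> I)"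

end

theory Submission
  imports Defs
begin

theorem lemma3p19:
  fixes T P :: "'a set" and h :: "'a \<Rightarrow> 'a \<Rightarrow> 'a \<Rightarrow> 'a" and m :: "'a \<Rightarrow> 'a \<Rightarrow> 'a"
  assumes "pretruss T h m"
    and "normal_subheap T h P"
    and "left_closed T h m P"
    and "\<exists>I. left_ideal T h m I \<and> I \<subseteq> P"
  shows "left_ideal T h m P"
proof -
  obtain I where I: "left_ideal T h m I" "I \<subseteq> P" using assms(4) by blast
  obtain i where i: "i \<in> I" using I(1) unfolding left_ideal_def normal_subheap_def sub_heap_def by blast
  have PT: "P \<subseteq> T" and Pc: "\<forall>a\<in>P. \<forall>b\<in>P. \<forall>c\<in>P. h a b c \<in> P"
    using assms(2) unfolding normal_subheap_def sub_heap_def by auto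
  have H: "heap T h" and mT: "\<forall>a\<in>T. \<forall>b\<in>T. m a b \<in> T" using assms(1) unfolding pretruss_def by auto
  have "m t p \<in> P" if t: "t \<in> T" and p: "p \<in> P" for t p
  proof -
    have iP: "i \<in> P" using i I(2) by blast
    have tiI: "m t i \<in> I" using I(1) i t unfolding left_ideal_def by blast
    hence tiP: "m t i \<in> P" using I(2) by blast
    have x: "h (m t p) (m t i) i \<in> P" using assms(3) iP p t unfolding left_closed_def by blast
    have "h (h (m t p) (m t i) i) i (m t i) \<in> P" using Pc x iP tiP by blast
    moreover have "h (h (m t p) (m t i) i) i (m t i) = m t p"
    proof -
      have a: "m t p \<in> T" "m t i \<in> T" "i \<in> T" using mT t p iP tiP PT by auto
      have "h (h (m t p) (m t i) i) i (m t i) = h (m t p) (m t i) (h i i (m t i))"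
        using H a unfolding heap_def by metis
      also have "\<dots> = m t p" using H a unfolding heap_def by metis
      finally show ?thesis .
    qed
    ultimately show ?thesis by simp
  qed
  then show ?thesis using assms(2) unfolding left_ideal_def by blast
qed

end
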